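(* Suppose the support of $\mathbb F$ is $(0,1)$. Among all mechanisms $x_i$ for agent $i$ satisfying (P) and the ex-post incentive constraint (EPIC): $\mathbb E[\omega x_i(s_i,s_{-i})\mid s_i,s_{-i}]\ge\mathbb E[\omega x_i(\hat s_i,s_{-i})\mid s_i,s_{-i}]$ for all $s_i,\hat s_i,s_{-i}$, the efficient mechanism $x_i(s_i,s_{-i})=\mathbb I\{\mathrm{LR}(s_i,s_{-i})\ge1\}$ uniquely (up to a measure-zero set) maximizes $\mathbb E[x_i(s)]$.
   Context: Setup. A state $\omega\in\{-1,+1\}$ is drawn with probability $1/2$ each. There are $n\ge 2$ agents. Conditional on $\omega$, signals $s_1,\dots,s_n$ are i.i.d. with distribution $\mathbb F_\omega$ on $[0,1]$, normalized so that $s_i=\mathbb P[\omega=+1\mid s_i]$. $\mathbb F_{-1},\mathbb F_{+1}$ are mutually absolutely continuous with densities; $\mathbb F=(\mathbb F_{-1}+\mathbb F_{+1})/2$ has a density. $\mathrm{LR}(s_i,s_{-i})=\prod_k\frac{s_k}{1-s_k}$ is the likelihood ratio of state $+1$ vs $-1$ given all signals. A mechanism for agent $i$ is a measurable $x_i$ from signal profiles to $[0,1]$, the probability agent $i$ gets a good worth $\omega$ to her (else payoff $0$). (P): $\mathbb E[\omega x_i(s_i,s_{-i})\mid s_i]\ge0$ for all $s_i$. *)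

theory Defs
  imports "HOL-Probability.Probability"
begin

text \<open>Signals live in [0,1]; the signal distribution in state omega is given by a
  density f (w.r.t. Lebesgue measure).  fp is the density of F_{+1}, fm the density of F_{-1}.
  Agents are indexed by {..<n}; a signal profile is an (extensional) function nat => real.\<close>

definition sigM :: "(real \<Rightarrow> real) \<Rightarrow> real measure" where
  "sigM f = density lborel (\<lambda>t. ennreal (f t))"

text \<open>Joint law of the profile conditional on the state (signals i.i.d. given the state).\<close>
definition profM :: "nat \<Rightarrow> (real \<Rightarrow> real) \<Rightarrow> (nat \<Rightarrow> real) measure" where
  "profM n f = PiM {..<n} (\<lambda>_. sigM f)"

definition LR :: "nat \<Rightarrow> (nat \<Rightarrow> real) \<Rightarrow> real" where
  "LR n s = (\<Prod>k<n. s k / (1 - s k))"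

text \<open>P[omega = +1 | s] = LR/(1+LR) (prior 1/2).\<close>
definition post_full :: "nat \<Rightarrow> (nat \<Rightarrow> real) \<Rightarrow> real" where
  "post_full n s = LR n s / (1 + LR n s)"

text \<open>E[omega * y | s] for a quantity y that is a function of the signal profile.\<close>
definition cond_payoff_full :: "nat \<Rightarrow> (nat \<Rightarrow> real) \<Rightarrow> real \<Rightarrow> real" where
  "cond_payoff_full n s y = post_full n s * y - (1 - post_full n s) * y"

text \<open>E[omega x(s_i,s_{-i}) | s_i = t]: with the normalization P[omega=+1 | s_i = t] = t
  and conditional independence, this is t E[x(t,s_{-i}) | omega=+1] - (1-t) E[x(t,s_{-i}) | omega=-1].
  Integrating x (s(i:=t)) over the full product measure integrates over s_{-i}.\<close>
definition interim_payoff ::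
  "(real \<Rightarrow> real) \<Rightarrow> (real \<Rightarrow> real) \<Rightarrow> nat \<Rightarrow> ((nat \<Rightarrow> real) \<Rightarrow> real) \<Rightarrow> nat \<Rightarrow> real \<Rightarrow> real" where
  "interim_payoff fp fm n x i t =
     t * (\<integral>s. x (s(i := t)) \<partial>profM n fp) - (1 - t) * (\<integral>s. x (s(i := t)) \<partial>profM n fm)"

definition ex_ante_alloc ::
  "(real \<Rightarrow> real) \<Rightarrow> (real \<Rightarrow> real) \<Rightarrow> nat \<Rightarrow> ((nat \<Rightarrow> real) \<Rightarrow> real) \<Rightarrow> real" where
  "ex_ante_alloc fp fm n x = (1/2) * (\<integral>s. x s \<partial>profM n fp) + (1/2) * (\<integral>s. x s \<partial>profM n fm)"

definition is_mechanism :: "nat \<Rightarrow> ((nat \<Rightarrow> real) \<Rightarrow> real) \<Rightarrow> bool" where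
  "is_mechanism n x \<longleftrightarrow> x \<in> borel_measurable (PiM {..<n} (\<lambda>_. lborel)) \<and> (\<forall>s. 0 \<le> x s \<and> x s \<le> 1)"

definition participation ::
  "(real \<Rightarrow> real) \<Rightarrow> (real \<Rightarrow> real) \<Rightarrow> nat \<Rightarrow> ((nat \<Rightarrow> real) \<Rightarrow> real) \<Rightarrow> nat \<Rightarrow> bool" where
  "participation fp fm n x i \<longleftrightarrow> (\<forall>t\<in>{0<..<1}. interim_payoff fp fm n x i t \<ge> 0)"

definition EPIC :: "nat \<Rightarrow> ((nat \<Rightarrow> real) \<Rightarrow> real) \<Rightarrow> nat \<Rightarrow> bool" where
  "EPIC n x i \<longleftrightarrow> (\<forall>s \<in> {..<n} \<rightarrow>\<^sub>E {0<..<1}. \<forall>t \<in> {0<..<1}.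
      cond_payoff_full n s (x s) \<ge> cond_payoff_full n s (x (s(i := t))))"

definition eff_mech :: "nat \<Rightarrow> (nat \<Rightarrow> real) \<Rightarrow> real" where
  "eff_mech n s = (if LR n s \<ge> 1 then 1 else 0)"

end

theory Submission
  imports Defs
begin

lemma sigM_sets[simp]: "sets (sigM f) = sets borel" and sigM_space[simp]: "space (sigM f) = UNIV"
  by (simp_all add: sigM_def)

lemma prob_sigM:
  assumes "f \<in> borel_measurable borel" "(\<integral>\<^sup>+ t. ennreal (f t) \<partial>lborel) = 1"
  shows "prob_space (sigM f)"
  unfolding sigM_def
  by (rule prob_spaceI) (use assms in \<open>simp add: emeasure_density\<close>)

lemma pps_sigM: "prob_space (sigM f) \<Longrightarrow> product_prob_space (\<lambda>_. sigM f)"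
  by (simp add: product_prob_space_def product_prob_space_axioms_def product_sigma_finite_def prob_space_imp_sigma_finite)

lemma prod_indicator_PiE:
  assumes "finite I" "s \<in> extensional I"
  shows "(\<Prod>k\<in>I. indicator (A k) (s k) :: ennreal) = indicator (Pi\<^sub>E I A) s"
proof (cases "s \<in> Pi\<^sub>E I A")
  case True then show ?thesis by (auto simp: indicator_def PiE_def Pi_def)
next
  case False
  then obtain k where "k \<in> I" "s k \<notin> A k" using assms(2) by (auto simp: PiE_def Pi_def)
  then show ?thesis using False assms(1) by (simp add: prod_zero_iff indicator_def) blast
qed

lemma PiM_density:
  assumes fin: "finite I" and sfM: "sigma_finite_measure M"
    and sfD: "sigma_finite_measure (density M r)" and r[measurable]: "r \<in> borel_measurable M"
  shows "PiM I (\<lambda>_. density M r) = density (PiM I (\<lambda>_. M)) (\<lambda>s. \<Prod>k\<in>I. r (s k))"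
proof -
  interpret D: product_sigma_finite "\<lambda>_. density M r" by (simp add: product_sigma_finite_def sfD)
  interpret M: product_sigma_finite "\<lambda>_. M" by (simp add: product_sigma_finite_def sfM)
  have meas: "(\<lambda>s. \<Prod>k\<in>I. r (s k)) \<in> borel_measurable (PiM I (\<lambda>_. M))"
    by measurable
  show ?thesis
  proof (rule D.PiM_eqI[symmetric, OF fin])
    show "sets (density (PiM I (\<lambda>_. M)) (\<lambda>s. \<Prod>k\<in>I. r (s k))) = sets (PiM I (\<lambda>_. density M r))"
      unfolding sets_density by (rule sets_PiM_cong) simp_all
  next
    fix A assume A: "\<And>i. i \<in> I \<Longrightarrow> A i \<in> sets (density M r)"
    then have A': "\<And>i. i \<in> I \<Longrightarrow> A i \<in> sets M" by simp
    have "emeasure (density (PiM I (\<lambda>_. M)) (\<lambda>s. \<Prod>k\<in>I. r (s k))) (Pi\<^sub>E I A)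
        = (\<integral>\<^sup>+ s. (\<Prod>k\<in>I. r (s k)) * indicator (Pi\<^sub>E I A) s \<partial>PiM I (\<lambda>_. M))"
      by (rule emeasure_density[OF meas]) (use A' fin in \<open>simp add: sets_PiM_I_finite\<close>)
    also have "\<dots> = (\<integral>\<^sup>+ s. (\<Prod>k\<in>I. r (s k) * indicator (A k) (s k)) \<partial>PiM I (\<lambda>_. M))"
      by (rule nn_integral_cong) (simp add: prod.distrib prod_indicator_PiE fin space_PiM PiE_def)
    also have "\<dots> = (\<Prod>k\<in>I. \<integral>\<^sup>+ u. r u * indicator (A k) u \<partial>M)"
      by (rule M.product_nn_integral_prod) (use fin A' in auto)
    also have "\<dots> = (\<Prod>k\<in>I. emeasure (density M r) (A k))"
      by (rule prod.cong) (simp_all add: emeasure_density A')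
    finally show "emeasure (density (PiM I (\<lambda>_. M)) (\<lambda>s. \<Prod>k\<in>I. r (s k))) (Pi\<^sub>E I A) = (\<Prod>k\<in>I. emeasure (density M r) (A k))" .
  qed
qed

definition rho :: "real \<Rightarrow> real" where
  "rho u = (if 0 < u \<and> u < 1 then u / (1 - u) else 0)"

lemma rho_meas[measurable]: "rho \<in> borel_measurable borel"
  unfolding rho_def by measurable

lemma rho_nonneg: "0 \<le> rho u"
  by (simp add: rho_def)

lemma sigM_fp_density:
  assumes meas_p: "fp \<in> borel_measurable borel" and meas_m: "fm \<in> borel_measurable borel"
    and nonneg_p: "\<forall>t. fp t \<ge> 0" and nonneg_m: "\<forall>t. fm t \<ge> 0"
    and on01: "\<forall>t. t \<notin> {0..1} \<longrightarrow> fp t = 0 \<and> fm t = 0"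
    and normalized: "AE t in lborel. fp t + fm t > 0 \<longrightarrow> t = fp t / (fp t + fm t)"
  shows "sigM fp = density (sigM fm) (\<lambda>u. ennreal (rho u))"
proof -
  have "density (sigM fm) (\<lambda>u. ennreal (rho u)) = density lborel (\<lambda>u. ennreal (fm u) * ennreal (rho u))"
    unfolding sigM_def by (rule density_density_eq) (use meas_m in simp_all)
  also have "\<dots> = density lborel (\<lambda>u. ennreal (fp u))"
  proof (rule density_cong)
    show "(\<lambda>u. ennreal (fm u) * ennreal (rho u)) \<in> borel_measurable lborel"
      using meas_m by simp
    show "(\<lambda>u. ennreal (fp u)) \<in> borel_measurable lborel"
      using meas_p by simp
    show "AE u in lborel. ennreal (fm u) * ennreal (rho u) = ennreal (fp u)"
      using normalized AE_lborel_singleton[of 0] AE_lborel_singleton[of 1]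
    proof eventually_elim
      case (elim u)
      show ?case
      proof (cases "0 < u \<and> u < 1")
        case False
        with elim have "fp u = 0 \<and> fm u = 0" using on01 by auto
        then show ?thesis by simp
      next
        case True
        have eq: "fm u * (u / (1 - u)) = fp u"
        proof (cases "fp u + fm u > 0")
          case True
          with elim have "u * (fp u + fm u) = fp u" by (simp add: field_simps)
          then have "fm u * u = fp u * (1 - u)" by (simp add: algebra_simps)
          then show ?thesis using \<open>0 < u \<and> u < 1\<close> by (simp add: field_simps)
        next
          case False
          then have "fp u = 0" "fm u = 0" using nonneg_p nonneg_m
            using nonneg_p[rule_format, of u] nonneg_m[rule_format, of u] by linarith+
          then show ?thesis by simp
        qed
        have "ennreal (fm u) * ennreal (rho u) = ennreal (fm u * rho u)"
          using nonneg_m rho_nonneg by (simp add: ennreal_mult)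
        also have "fm u * rho u = fp u" using True eq by (simp add: rho_def)
        finally show ?thesis .
      qed
    qed
  qed
  finally have eq: "density (sigM fm) (\<lambda>u. ennreal (rho u)) = density lborel (\<lambda>u. ennreal (fp u))" .
  show ?thesis unfolding eq by (simp only: sigM_def)
qed

lemma meas_x:
  fixes x :: "(nat \<Rightarrow> real) \<Rightarrow> real"
  assumes x: "x \<in> borel_measurable (PiM {..<n} (\<lambda>_. lborel))"
    and M: "sets M = sets borel"
  shows "x \<in> borel_measurable (PiM {..<n} (\<lambda>_. M))"
proof -
  have "sets (PiM {..<n} (\<lambda>_. M)) = sets (PiM {..<n} (\<lambda>_. lborel))"
    by (rule sets_PiM_cong) (simp_all add: M)
  from measurable_cong_sets[OF this refl, of "borel :: real measure"] x show ?thesis by (simp only:)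
qed

lemma meas_upd:
  fixes x :: "(nat \<Rightarrow> real) \<Rightarrow> real"
  assumes x: "x \<in> borel_measurable (PiM {..<n} (\<lambda>_. lborel))" and i: "i < n"
    and M: "sets M = sets borel"
  shows "(\<lambda>s. x (s(i := t))) \<in> borel_measurable (PiM {..<n} (\<lambda>_. M))"
proof -
  have x': "x \<in> borel_measurable (PiM {..<n} (\<lambda>_. M))"
    using meas_x[OF x M] .
  have "(\<lambda>s. s(i := t)) \<in> measurable (PiM {..<n} (\<lambda>_. M)) (PiM {..<n} (\<lambda>_. M))"
    by (rule measurable_fun_upd[where J="{..<n}"]) (use i M sets_eq_imp_space_eq[OF M] in auto)
  from measurable_compose[OF this x'] show ?thesis .
qed

lemma integrable01:
  fixes f :: "'a \<Rightarrow> real"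
  assumes "prob_space M" "f \<in> borel_measurable M" "\<And>s. 0 \<le> f s \<and> f s \<le> 1"
  shows "integrable M f"
proof -
  interpret prob_space M by fact
  show ?thesis
    by (rule integrable_const_bound[where B=1]) (use assms in auto)
qed

lemma split_i:
  fixes h :: "(nat \<Rightarrow> real) \<Rightarrow> real"
  assumes ps: "prob_space (sigM f)" and i: "i < n"
    and h: "h \<in> borel_measurable (PiM {..<n} (\<lambda>_. lborel))" and hb: "\<And>s. 0 \<le> h s"
  shows "(\<integral>s. h (s(i:=t)) \<partial>profM n f) = (\<integral>y. h (y(i:=t)) \<partial>PiM ({..<n}-{i}) (\<lambda>_. sigM f))"
proof -
  interpret P: product_prob_space "\<lambda>_. sigM f" "{..<n}" by (rule pps_sigM[OF ps])
  define J where "J = {..<n} - {i}"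
  have ins: "{..<n} = insert i J" using i by (auto simp: J_def)
  have fJ: "finite J" "i \<notin> J" by (auto simp: J_def)
  have m0: "(\<lambda>s. h (s(i:=t))) \<in> borel_measurable (PiM {..<n} (\<lambda>_. sigM f))"
    by (rule meas_upd[OF h i]) simp
  then have m: "(\<lambda>s. ennreal (h (s(i:=t)))) \<in> borel_measurable (PiM (insert i J) (\<lambda>_. sigM f))"
    using ins by simp
  have mJ: "(\<lambda>y. h (y(i:=t))) \<in> borel_measurable (PiM J (\<lambda>_. sigM f))"
  proof -
    have "(\<lambda>y. y(i:=t)) \<in> measurable (PiM J (\<lambda>_. sigM f)) (PiM {..<n} (\<lambda>_. sigM f))"
      by (rule measurable_fun_upd[where J=J]) (use ins in auto)
    moreover have "h \<in> borel_measurable (PiM {..<n} (\<lambda>_. sigM f))" by (rule meas_x[OF h]) simp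
    ultimately show ?thesis by (rule measurable_compose)
  qed
  have "(\<integral>\<^sup>+s. ennreal (h (s(i:=t))) \<partial>PiM (insert i J) (\<lambda>_. sigM f))
      = (\<integral>\<^sup>+ y. (\<integral>\<^sup>+ u. ennreal (h ((y(i:=u))(i:=t))) \<partial>sigM f) \<partial>PiM J (\<lambda>_. sigM f))"
    by (rule P.product_nn_integral_insert[OF fJ m])
  also have "\<dots> = (\<integral>\<^sup>+ y. ennreal (h (y(i:=t))) \<partial>PiM J (\<lambda>_. sigM f))"
    using prob_space.emeasure_space_1[OF ps] by simp
  finally have nn: "(\<integral>\<^sup>+s. ennreal (h (s(i:=t))) \<partial>PiM {..<n} (\<lambda>_. sigM f))
      = (\<integral>\<^sup>+ y. ennreal (h (y(i:=t))) \<partial>PiM J (\<lambda>_. sigM f))" using ins by simp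
  show ?thesis
    unfolding profM_def J_def[symmetric]
    by (subst integral_eq_nn_integral[OF m0], simp add: hb, subst integral_eq_nn_integral[OF mJ], simp add: hb)
       (simp add: nn)
qed

lemma PiM_fp:
  assumes eq: "sigM fp = density (sigM fm) (\<lambda>u. ennreal (rho u))"
    and psp: "prob_space (sigM fp)" and psm: "prob_space (sigM fm)" and fin: "finite I"
  shows "PiM I (\<lambda>_. sigM fp) = density (PiM I (\<lambda>_. sigM fm)) (\<lambda>y. ennreal (\<Prod>k\<in>I. rho (y k)))"
proof -
  have "PiM I (\<lambda>_. sigM fp) = density (PiM I (\<lambda>_. sigM fm)) (\<lambda>y. \<Prod>k\<in>I. ennreal (rho (y k)))"
  proof -
    have "borel_measurable (sigM fm) = (borel_measurable borel :: (real \<Rightarrow> ennreal) set)" by (rule measurable_cong_sets) simp_all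
    then have rm: "(\<lambda>u. ennreal (rho u)) \<in> borel_measurable (sigM fm)" by simp
    show ?thesis unfolding eq
      by (rule PiM_density[OF fin _ _ rm]) (use psm psp eq prob_space_imp_sigma_finite in \<open>auto\<close>)
  qed
  also have "(\<lambda>y. \<Prod>k\<in>I. ennreal (rho (y k))) = (\<lambda>y. ennreal (\<Prod>k\<in>I. rho (y k)))"
    by (simp add: prod_ennreal rho_nonneg)
  finally show ?thesis .
qed

lemma AE_in01:
  assumes ps: "prob_space (sigM f)" and fm: "f \<in> borel_measurable borel"
    and on01: "\<forall>t. t \<notin> {0..1} \<longrightarrow> f t = 0" and fin: "finite I"
  shows "AE s in PiM I (\<lambda>_. sigM f). \<forall>k\<in>I. 0 < s k \<and> s k < 1"
proof -
  interpret P: product_prob_space "\<lambda>_. sigM f" I by (rule pps_sigM[OF ps])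
  have "AE u in sigM f. 0 < u \<and> u < 1"
    unfolding sigM_def
  proof (subst AE_density)
    show "(\<lambda>t. ennreal (f t)) \<in> borel_measurable lborel" using fm by simp
    show "AE x in lborel. 0 < ennreal (f x) \<longrightarrow> 0 < x \<and> x < 1"
      using AE_lborel_singleton[of 0] AE_lborel_singleton[of 1]
    proof eventually_elim
      case (elim u)
      then show ?case using on01 by (cases "u \<in> {0..1}") auto
    qed
  qed
  note A = this
  have "AE s in PiM I (\<lambda>_. sigM f). 0 < s k \<and> s k < 1" if "k \<in> I" for k
    using P.AE_component[OF that A] by simp
  then show ?thesis by (rule AE_finite_allI[OF fin])
qed

lemma LR_pos:
  assumes "\<forall>k<n. 0 < s k \<and> s k < 1"
  shows "LR n s > 0"
  unfolding LR_def using assms by (intro prod_pos) auto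

lemma cpf_eq:
  assumes "LR n s > 0"
  shows "cond_payoff_full n s y = (LR n s - 1) / (LR n s + 1) * y"
proof -
  define L where "L = LR n s"
  have L: "L > 0" using assms by (simp add: L_def)
  have h: "1 - L/(1+L) = 1/(1+L)" using L by (simp add: field_simps)
  have "L/(1+L)*y - (1 - L/(1+L))*y = (L-1)/(L+1)*y"
    unfolding h using L by (simp add: diff_divide_distrib[symmetric] algebra_simps)
  then show ?thesis unfolding cond_payoff_full_def post_full_def L_def .
qed

lemma LR_upd:
  assumes i: "i < n" and s: "\<forall>k\<in>{..<n}-{i}. 0 < y k \<and> y k < 1"
  shows "LR n (y(i:=t)) = t / (1 - t) * (\<Prod>k\<in>{..<n}-{i}. rho (y k))"
proof -
  have ins: "{..<n} = insert i ({..<n}-{i})" using i by auto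
  have "LR n (y(i:=t)) = t / (1 - t) * (\<Prod>k\<in>{..<n}-{i}. (y(i:=t)) k / (1 - (y(i:=t)) k))"
    unfolding LR_def by (simp add: prod.remove[where x=i] i)
  also have "(\<Prod>k\<in>{..<n}-{i}. (y(i:=t)) k / (1 - (y(i:=t)) k)) = (\<Prod>k\<in>{..<n}-{i}. rho (y k))"
    by (rule prod.cong) (use s in \<open>auto simp: rho_def\<close>)
  finally show ?thesis .
qed

lemma rho_meas_sigM[measurable]: "rho \<in> borel_measurable (sigM f)"
proof -
  have "borel_measurable (sigM f) = (borel_measurable borel :: (real \<Rightarrow> real) set)"
    by (rule measurable_cong_sets) simp_all
  then show ?thesis by simp
qed

lemma meas_updJ:
  fixes h :: "(nat \<Rightarrow> real) \<Rightarrow> real"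
  assumes h: "h \<in> borel_measurable (PiM {..<n} (\<lambda>_. lborel))" and i: "i < n"
    and M: "sets M = sets borel"
  shows "(\<lambda>y. h (y(i:=t))) \<in> borel_measurable (PiM ({..<n}-{i}) (\<lambda>_. M))"
proof -
  have "(\<lambda>y. y(i:=t)) \<in> measurable (PiM ({..<n}-{i}) (\<lambda>_. M)) (PiM {..<n} (\<lambda>_. M))"
    by (rule measurable_fun_upd[where J="{..<n}-{i}"]) (use i M sets_eq_imp_space_eq[OF M] in auto)
  moreover have "h \<in> borel_measurable (PiM {..<n} (\<lambda>_. M))" by (rule meas_x[OF h M])
  ultimately show ?thesis by (rule measurable_compose)
qed

lemma ae_eq_from_int:
  fixes f g :: "'a \<Rightarrow> real"
  assumes "integrable M f" "integrable M g" "AE x in M. f x \<le> g x" "integral\<^sup>L M f = integral\<^sup>L M g"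
  shows "AE x in M. f x = g x"
proof -
  have "integral\<^sup>L M (\<lambda>x. g x - f x) = 0" using assms by (simp add: Bochner_Integration.integral_diff)
  moreover have "integrable M (\<lambda>x. g x - f x)" using assms by simp
  moreover have "AE x in M. 0 \<le> g x - f x" using assms(3) by eventually_elim simp
  ultimately have "AE x in M. g x - f x = 0" using integral_nonneg_eq_0_iff_AE by blast
  then show ?thesis by eventually_elim simp
qed

lemma c_nonneg: "1 \<le> (L::real) \<Longrightarrow> 0 \<le> (L - 1) / (L + 1)"
  by simp
lemma c_neg: "0 < (L::real) \<Longrightarrow> L < 1 \<Longrightarrow> (L - 1) / (L + 1) < 0"
  by (simp add: divide_neg_pos)

lemma eff_meas: "eff_mech n \<in> borel_measurable (PiM {..<n} (\<lambda>_. lborel))"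
  unfolding eff_mech_def[abs_def] LR_def by measurable

lemma eff01: "0 \<le> eff_mech n s \<and> eff_mech n s \<le> 1"
  by (simp add: eff_mech_def)

lemma epic_eff: "EPIC n (eff_mech n) i"
  unfolding EPIC_def
proof (intro ballI)
  fix s :: "nat \<Rightarrow> real" and t :: real
  assume s: "s \<in> {..<n} \<rightarrow>\<^sub>E {0<..<1}" and t: "t \<in> {0<..<1}"
  have L: "LR n s > 0" using s by (intro LR_pos) (auto simp: PiE_def Pi_def)
  show "cond_payoff_full n s (eff_mech n (s(i:=t))) \<le> cond_payoff_full n s (eff_mech n s)"
    unfolding cpf_eq[OF L] eff_mech_def
    using L c_nonneg[of "LR n s"] c_neg[of "LR n s"] by auto
qed

lemma part_eff:
  assumes i: "i < n" and meas_m: "fm \<in> borel_measurable borel"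
    and on01: "\<forall>t. t \<notin> {0..1} \<longrightarrow> fp t = 0 \<and> fm t = 0"
    and eqd: "sigM fp = density (sigM fm) (\<lambda>u. ennreal (rho u))"
    and psp: "prob_space (sigM fp)" and psm: "prob_space (sigM fm)"
  shows "participation fp fm n (eff_mech n) i"
  unfolding participation_def interim_payoff_def
proof
  fix t :: real assume t: "t \<in> {0<..<1}"
  define J where "J = {..<n} - {i}"
  define \<phi> where "\<phi> y = eff_mech n (y(i:=t))" for y
  define Qf where "Qf y = (\<Prod>k\<in>J. rho (y k))" for y
  let ?Rm = "PiM J (\<lambda>_. sigM fm)"
  let ?Rp = "PiM J (\<lambda>_. sigM fp)"
  have finJ: "finite J" by (simp add: J_def)
  have s1: "(\<integral>s. eff_mech n (s(i:=t)) \<partial>profM n fp) = (\<integral>y. \<phi> y \<partial>?Rp)"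
    unfolding \<phi>_def J_def by (rule split_i[OF psp i eff_meas]) (simp add: eff01)
  have s2: "(\<integral>s. eff_mech n (s(i:=t)) \<partial>profM n fm) = (\<integral>y. \<phi> y \<partial>?Rm)"
    unfolding \<phi>_def J_def by (rule split_i[OF psm i eff_meas]) (simp add: eff01)
  have Rp: "?Rp = density ?Rm (\<lambda>y. ennreal (Qf y))"
    unfolding Qf_def by (rule PiM_fp[OF eqd psp psm finJ])
  have \<phi>m: "\<phi> \<in> borel_measurable ?Rm"
    unfolding \<phi>_def J_def by (rule meas_updJ[OF eff_meas i]) simp
  have \<phi>p: "\<phi> \<in> borel_measurable ?Rp"
    unfolding \<phi>_def J_def by (rule meas_updJ[OF eff_meas i]) simp
  have Qfm[measurable]: "Qf \<in> borel_measurable ?Rm"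
    unfolding Qf_def by measurable
  have pRm: "prob_space ?Rm" by (rule prob_space_PiM) (use psm in simp)
  have pRp: "prob_space ?Rp" by (rule prob_space_PiM) (use psp in simp)
  have Qfnn: "\<And>y. 0 \<le> Qf y" unfolding Qf_def by (simp add: prod_nonneg rho_nonneg)
  have int\<phi>m: "integrable ?Rm \<phi>" by (rule integrable01[OF pRm \<phi>m]) (simp add: \<phi>_def eff01)
  have int\<phi>p: "integrable ?Rp \<phi>" by (rule integrable01[OF pRp \<phi>p]) (simp add: \<phi>_def eff01)
  have int\<Pi>\<phi>: "integrable ?Rm (\<lambda>y. Qf y * \<phi> y)"
    using int\<phi>p unfolding Rp by (subst (asm) integrable_density) (use \<phi>m Qfnn in auto)
  have ip: "(\<integral>y. \<phi> y \<partial>?Rp) = (\<integral>y. Qf y * \<phi> y \<partial>?Rm)"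
    unfolding Rp by (subst integral_density) (use \<phi>m Qfnn in auto)
  have AE01: "AE y in ?Rm. \<forall>k\<in>J. 0 < y k \<and> y k < 1"
    by (rule AE_in01[OF psm meas_m _ finJ]) (use on01 in auto)
  have "(\<integral>y. (1 - t) * \<phi> y \<partial>?Rm) \<le> (\<integral>y. t * (Qf y * \<phi> y) \<partial>?Rm)"
  proof (rule integral_mono_AE)
    show "integrable ?Rm (\<lambda>y. (1 - t) * \<phi> y)" using int\<phi>m by simp
    show "integrable ?Rm (\<lambda>y. t * (Qf y * \<phi> y))" using int\<Pi>\<phi> by simp
    show "AE y in ?Rm. (1 - t) * \<phi> y \<le> t * (Qf y * \<phi> y)"
      using AE01
    proof eventually_elim
      case (elim y)
      have LRe: "LR n (y(i:=t)) = t / (1 - t) * Qf y"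
        unfolding Qf_def J_def by (rule LR_upd[OF i]) (use elim in \<open>simp add: J_def\<close>)
      show ?case
      proof (cases "1 \<le> LR n (y(i:=t))")
        case True
        then have "1 \<le> t / (1 - t) * Qf y" using LRe by simp
        then have "1 - t \<le> t * Qf y" using t by (simp add: field_simps)
        then show ?thesis using True by (simp add: \<phi>_def eff_mech_def)
      next
        case False
        then show ?thesis by (simp add: \<phi>_def eff_mech_def)
      qed
    qed
  qed
  then have "(1 - t) * (\<integral>y. \<phi> y \<partial>?Rm) \<le> t * (\<integral>y. Qf y * \<phi> y \<partial>?Rm)"
    by simp
  then show "0 \<le> t * (\<integral>s. eff_mech n (s(i:=t)) \<partial>profM n fp) - (1 - t) * (\<integral>s. eff_mech n (s(i:=t)) \<partial>profM n fm)"
    unfolding s1 s2 ip by simp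
qed

theorem proposition2:
  fixes fp fm :: "real \<Rightarrow> real" and n i :: nat
  assumes n2: "n \<ge> 2" and i: "i < n"
    and meas_p: "fp \<in> borel_measurable borel" and meas_m: "fm \<in> borel_measurable borel"
    and nonneg_p: "\<forall>t. fp t \<ge> 0" and nonneg_m: "\<forall>t. fm t \<ge> 0"
    and on01: "\<forall>t. t \<notin> {0..1} \<longrightarrow> fp t = 0 \<and> fm t = 0"
    and prob_p: "(\<integral>\<^sup>+ t. ennreal (fp t) \<partial>lborel) = 1"
    and prob_m: "(\<integral>\<^sup>+ t. ennreal (fm t) \<partial>lborel) = 1"
    and mutual_ac: "AE t in lborel. (fp t > 0 \<longleftrightarrow> fm t > 0)"
    and normalized: "AE t in lborel. fp t + fm t > 0 \<longrightarrow> t = fp t / (fp t + fm t)"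
    and support: "\<forall>a b. 0 \<le> a \<and> a < b \<and> b \<le> 1 \<longrightarrow>
                    (\<integral>\<^sup>+ t\<in>{a<..<b}. ennreal ((fp t + fm t) / 2) \<partial>lborel) > 0"
  shows "is_mechanism n (eff_mech n) \<and> participation fp fm n (eff_mech n) i \<and> EPIC n (eff_mech n) i
         \<and> (\<forall>x. is_mechanism n x \<and> participation fp fm n x i \<and> EPIC n x i \<longrightarrow>
               ex_ante_alloc fp fm n x \<le> ex_ante_alloc fp fm n (eff_mech n)
             \<and> (ex_ante_alloc fp fm n x = ex_ante_alloc fp fm n (eff_mech n) \<longrightarrow>
                  (AE s in profM n fp. x s = eff_mech n s) \<and> (AE s in profM n fm. x s = eff_mech n s)))"
proof -
  have psp: "prob_space (sigM fp)" by (rule prob_sigM[OF meas_p prob_p])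
  have psm: "prob_space (sigM fm)" by (rule prob_sigM[OF meas_m prob_m])
  have eqd: "sigM fp = density (sigM fm) (\<lambda>u. ennreal (rho u))"
    by (rule sigM_fp_density[OF meas_p meas_m nonneg_p nonneg_m on01 normalized])
  have mechE: "is_mechanism n (eff_mech n)"
    unfolding is_mechanism_def using eff_meas eff01 by blast
  have partE: "participation fp fm n (eff_mech n) i"
    by (rule part_eff[OF i meas_m on01 eqd psp psm])
  have opt: "ex_ante_alloc fp fm n x \<le> ex_ante_alloc fp fm n (eff_mech n)
             \<and> (ex_ante_alloc fp fm n x = ex_ante_alloc fp fm n (eff_mech n) \<longrightarrow>
                  (AE s in profM n fp. x s = eff_mech n s) \<and> (AE s in profM n fm. x s = eff_mech n s))"
    if xmech: "is_mechanism n x" and xpart: "participation fp fm n x i" and xepic: "EPIC n x i" for x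
  proof -
    let ?Pm = "profM n fm" and ?Pp = "profM n fp"
    have xl: "x \<in> borel_measurable (PiM {..<n} (\<lambda>_. lborel))" and x01: "\<And>s. 0 \<le> x s \<and> x s \<le> 1"
      using xmech by (auto simp: is_mechanism_def)
    have xm[measurable]: "x \<in> borel_measurable ?Pm" unfolding profM_def by (rule meas_x[OF xl]) simp
    have xp: "x \<in> borel_measurable ?Pp" unfolding profM_def by (rule meas_x[OF xl]) simp
    have em: "eff_mech n \<in> borel_measurable ?Pm" unfolding profM_def by (rule meas_x[OF eff_meas]) simp
    have ep: "eff_mech n \<in> borel_measurable ?Pp" unfolding profM_def by (rule meas_x[OF eff_meas]) simp
    have pPm: "prob_space ?Pm" unfolding profM_def by (rule prob_space_PiM) (use psm in simp)
    have pPp: "prob_space ?Pp" unfolding profM_def by (rule prob_space_PiM) (use psp in simp)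
    have Pp_dens: "?Pp = density ?Pm (\<lambda>s. ennreal (\<Prod>k\<in>{..<n}. rho (s k)))"
      unfolding profM_def by (rule PiM_fp[OF eqd psp psm]) simp
    have bound: "(1 - t) * (\<integral>s. x (s(i:=t)) \<partial>?Pm) \<le> t" if t: "t \<in> {0<..<1}" for t
    proof -
      have m1: "(\<lambda>s. x (s(i:=t))) \<in> borel_measurable ?Pp" unfolding profM_def by (rule meas_upd[OF xl i]) simp
      have "(\<integral>s. x (s(i:=t)) \<partial>?Pp) \<le> 1"
        by (rule prob_space.integral_le_const[OF pPp integrable01[OF pPp m1]]) (use x01 in auto)
      then have "t * (\<integral>s. x (s(i:=t)) \<partial>?Pp) \<le> t" using t by (simp add: mult_left_le)
      moreover have "0 \<le> t * (\<integral>s. x (s(i:=t)) \<partial>?Pp) - (1 - t) * (\<integral>s. x (s(i:=t)) \<partial>?Pm)"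
        using xpart t unfolding participation_def interim_payoff_def by blast
      ultimately show ?thesis by linarith
    qed
    define C where "C s \<longleftrightarrow> (\<forall>k\<in>{..<n}. 0 < s k \<and> s k < 1) \<and> LR n s < 1" for s :: "nat \<Rightarrow> real"
    define hC where "hC s = (if C s then x s else 0)" for s
    have hCl: "hC \<in> borel_measurable (PiM {..<n} (\<lambda>_. lborel))"
      unfolding hC_def[abs_def] C_def LR_def using xl by measurable
    have hCm: "hC \<in> borel_measurable ?Pm"
      unfolding profM_def by (rule meas_x[OF hCl]) simp
    have hC01: "0 \<le> hC s \<and> hC s \<le> 1" for s using x01 by (simp add: hC_def)
    have inthC: "integrable ?Pm hC" by (rule integrable01[OF pPm hCm hC01])
    have hCle: "hC s \<le> x (s(i:=t))" if s: "s \<in> space ?Pm" and t: "t \<in> {0<..<1}" for s t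
    proof (cases "C s")
      case True
      have sE: "s \<in> {..<n} \<rightarrow>\<^sub>E {0<..<1}"
        using s True by (auto simp: C_def profM_def space_PiM PiE_def Pi_def)
      have L: "LR n s > 0" using True by (intro LR_pos) (auto simp: C_def)
      have c: "(LR n s - 1) / (LR n s + 1) < 0" using True L by (intro c_neg) (auto simp: C_def)
      have "cond_payoff_full n s (x (s(i := t))) \<le> cond_payoff_full n s (x s)"
        using xepic sE t unfolding EPIC_def by blast
      then have "((LR n s - 1) / (LR n s + 1)) * x (s(i := t)) \<le> ((LR n s - 1) / (LR n s + 1)) * x s"
        unfolding cpf_eq[OF L] .
      then have "x s \<le> x (s(i := t))" using mult_le_cancel_left_neg[OF c] by blast
      then show ?thesis using True by (simp add: hC_def)
    next
      case False
      then show ?thesis using x01 by (simp add: hC_def)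
    qed
    have le_t: "(1 - t) * (\<integral>s. hC s \<partial>?Pm) \<le> t" if t: "t \<in> {0<..<1}" for t
    proof -
      have m1: "(\<lambda>s. x (s(i:=t))) \<in> borel_measurable ?Pm" unfolding profM_def by (rule meas_upd[OF xl i]) simp
      have "(\<integral>s. hC s \<partial>?Pm) \<le> (\<integral>s. x (s(i:=t)) \<partial>?Pm)"
        by (rule integral_mono[OF inthC integrable01[OF pPm m1]]) (use x01 hCle t in auto)
      then have "(1 - t) * (\<integral>s. hC s \<partial>?Pm) \<le> (1 - t) * (\<integral>s. x (s(i:=t)) \<partial>?Pm)"
        using t by (intro mult_left_mono) auto
      with bound[OF t] show ?thesis by linarith
    qed
    have hC_nonneg: "0 \<le> (\<integral>s. hC s \<partial>?Pm)" using hC01 by (simp add: integral_nonneg)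
    have hC0: "(\<integral>s. hC s \<partial>?Pm) = 0"
    proof (rule ccontr)
      assume "(\<integral>s. hC s \<partial>?Pm) \<noteq> 0"
      then have a: "(\<integral>s. hC s \<partial>?Pm) > 0" using hC_nonneg by linarith
      define a where "a = (\<integral>s. hC s \<partial>?Pm)"
      define t where "t = min (1/2) (a/4)"
      have t: "t \<in> {0<..<1}" using a by (auto simp: t_def a_def)
      have "(1 - t) * a \<le> t" using le_t[OF t] by (simp add: a_def)
      moreover have "t \<le> 1/2" "t \<le> a/4" by (auto simp: t_def)
      moreover have "a / 2 \<le> (1 - t) * a" using \<open>t \<le> 1/2\<close> a by (simp add: a_def)
      moreover have "a > 0" using a by (simp add: a_def)
      ultimately show False by linarith
    qed
    have AEhC: "AE s in ?Pm. hC s = 0"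
      using integral_nonneg_eq_0_iff_AE[OF inthC] hC0 hC01 by auto
    have AE01: "AE s in ?Pm. \<forall>k\<in>{..<n}. 0 < s k \<and> s k < 1"
      unfolding profM_def by (rule AE_in01[OF psm meas_m _ finite_lessThan]) (use on01 in auto)
    have AEm: "AE s in ?Pm. x s \<le> eff_mech n s"
      using AEhC AE01
    proof eventually_elim
      case (elim s)
      show ?case
      proof (cases "1 \<le> LR n s")
        case True then show ?thesis using x01 by (simp add: eff_mech_def)
      next
        case False
        then have "C s" using elim by (simp add: C_def)
        then show ?thesis using elim by (simp add: hC_def eff_mech_def)
      qed
    qed
    have dm: "(\<lambda>s. ennreal (\<Prod>k\<in>{..<n}. rho (s k))) \<in> borel_measurable ?Pm"
      unfolding profM_def by measurable
    have AEp: "AE s in ?Pp. x s \<le> eff_mech n s"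
      unfolding Pp_dens AE_density[OF dm] using AEm by eventually_elim simp
    have ixm: "integrable ?Pm x" by (rule integrable01[OF pPm xm x01])
    have ixp: "integrable ?Pp x" by (rule integrable01[OF pPp xp x01])
    have iem: "integrable ?Pm (eff_mech n)" by (rule integrable01[OF pPm em eff01])
    have iep: "integrable ?Pp (eff_mech n)" by (rule integrable01[OF pPp ep eff01])
    have lem: "(\<integral>s. x s \<partial>?Pm) \<le> (\<integral>s. eff_mech n s \<partial>?Pm)"
      by (rule integral_mono_AE[OF ixm iem AEm])
    have lep: "(\<integral>s. x s \<partial>?Pp) \<le> (\<integral>s. eff_mech n s \<partial>?Pp)"
      by (rule integral_mono_AE[OF ixp iep AEp])
    show ?thesis
    proof
      show "ex_ante_alloc fp fm n x \<le> ex_ante_alloc fp fm n (eff_mech n)"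
        unfolding ex_ante_alloc_def using lem lep by simp
      show "ex_ante_alloc fp fm n x = ex_ante_alloc fp fm n (eff_mech n) \<longrightarrow>
          (AE s in profM n fp. x s = eff_mech n s) \<and> (AE s in profM n fm. x s = eff_mech n s)"
      proof
        assume "ex_ante_alloc fp fm n x = ex_ante_alloc fp fm n (eff_mech n)"
        then have eqs: "(\<integral>s. x s \<partial>?Pm) = (\<integral>s. eff_mech n s \<partial>?Pm)" "(\<integral>s. x s \<partial>?Pp) = (\<integral>s. eff_mech n s \<partial>?Pp)"
          unfolding ex_ante_alloc_def using lem lep by linarith+
        show "(AE s in profM n fp. x s = eff_mech n s) \<and> (AE s in profM n fm. x s = eff_mech n s)"
          using ae_eq_from_int[OF ixp iep AEp eqs(2)] ae_eq_from_int[OF ixm iem AEm eqs(1)] by blast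
      qed
    qed
  qed
  show ?thesis using mechE partE epic_eff opt by blast
qed

end
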